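(* Let $\boldsymbol\alpha$ be a fixed static allocation in the setting described in the context. Then $$\min_{j\ne i^*}\mathrm{LDR}_{j,i^*}\;\ge\;\underline{\mathrm{LDR}}:=\min_{(i,\theta_b)\in\Xi}W_i(\theta_b)G_i(\theta_b),$$ where $\mathrm{LDR}_{j,i^*}:=\min_{\mathbf M\in\mathcal A_j}\sum_{(i,\theta_b)\in I(\mathbf M)}G_i(\theta_b)$.
   Context: There are $k\ge2$ solutions and $B$ parameter values $\theta_1,\dots,\theta_B$ with probabilities $p_1,\dots,p_B>0$, $\sum_bp_b=1$. For each $i,b$, $y_i(\theta_b)$ is the mean simulation output of solution $i$ at $\theta_b$, with simulation variance $\lambda_i^2(\theta_b)>0$. Each $i^b=\arg\min_iy_i(\theta_b)$ is assumed unique, and $i^*=\arg\max_i\sum_bp_b\mathbf 1\{i=i^b\}$ is assumed unique. Favorable sets: $\Theta_i=\{\theta_b:i^b=i\}$. A static allocation is $\boldsymbol\alpha$ with $\alpha_i(\theta_b)\ge0$, $\sum_{i,b}\alpha_i(\theta_b)=1$. For $i\ne i^b$, $$G_i(\theta_b)=\frac{(y_i(\theta_b)-y_{i^b}(\theta_b))^2}{2\left(\lambda_i^2(\theta_b)/\alpha_i(\theta_b)+\lambda_{i^b}^2(\theta_b)/\alpha_{i^b}(\theta_b)\right)},$$ with $G_i(\theta_b)=0$ if $\alpha_i(\theta_b)=0$ or $\alpha_{i^b}(\theta_b)=0$. Let $\mathcal M=\{\mathbf M\in\{0,1\}^{k\times B}:\mathbf M^\top\mathbf 1_k=\mathbf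 1_B\}$ with entries $m_{i,b}$; $d_j(\mathbf M)=\sum_bp_bm_{i^*,b}-\sum_bp_bm_{j,b}$; $I(\mathbf M)=\{(i,\theta_b):m_{i,b}=1,i\ne i^b\}$; for $j\ne i^*$, $\mathcal A_j=\{\mathbf M\in\mathcal M:d_j(\mathbf M)\le0\}$. Let $d_j=\sum_bp_b\mathbf 1\{i^*=i^b\}-\sum_bp_b\mathbf 1\{j=i^b\}$. Let $\Xi=\{(i,\theta_b):i\ne i^*,i\ne i^b\}$. Balance weights: $W_i(\theta_b)=\infty$ for $(i,\theta_b)\notin\Xi$, and for $(i,\theta_b)\in\Xi$, $$W_i(\theta_b)=\begin{cases}\max\left\{\min\left(\min_{j\ne i^*}d_j,\ d_i/2\right)/p_b,\ 1\right\},&\theta_b\in\Theta_{i^*},\\ \max\{d_i/p_b,1\},&\theta_b\notin\Theta_{i^*}.\end{cases}$$ *)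

theory Defs
  imports Complex_Main "HOL-Library.Extended_Real"
begin

text \<open>Solutions are indexed by 0..<k, parameter values by 0..<B.
  y i b = y_i(theta_b), lam2 i b = lambda_i^2(theta_b), alpha i b = alpha_i(theta_b),
  ib b = i^b, istar = i^*.\<close>

definition Gfun :: "(nat \<Rightarrow> nat \<Rightarrow> real) \<Rightarrow> (nat \<Rightarrow> nat \<Rightarrow> real) \<Rightarrow> (nat \<Rightarrow> nat \<Rightarrow> real)
    \<Rightarrow> (nat \<Rightarrow> nat) \<Rightarrow> nat \<Rightarrow> nat \<Rightarrow> real" where
  "Gfun y lam2 alpha ib i b =
     (if alpha i b = 0 \<or> alpha (ib b) b = 0 then 0
      else (y i b - y (ib b) b)^2 /
           (2 * (lam2 i b / alpha i b + lam2 (ib b) b / alpha (ib b) b)))"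

definition Mset :: "nat \<Rightarrow> nat \<Rightarrow> (nat \<Rightarrow> nat \<Rightarrow> real) set" where
  "Mset k B = {m. (\<forall>i<k. \<forall>b<B. m i b \<in> {0,1}) \<and> (\<forall>b<B. (\<Sum>i<k. m i b) = 1)}"

definition dM :: "nat \<Rightarrow> (nat \<Rightarrow> real) \<Rightarrow> nat \<Rightarrow> nat \<Rightarrow> (nat \<Rightarrow> nat \<Rightarrow> real) \<Rightarrow> real" where
  "dM B p istar j m = (\<Sum>b<B. p b * m istar b) - (\<Sum>b<B. p b * m j b)"

definition IM :: "nat \<Rightarrow> nat \<Rightarrow> (nat \<Rightarrow> nat) \<Rightarrow> (nat \<Rightarrow> nat \<Rightarrow> real) \<Rightarrow> (nat \<times> nat) set" where
  "IM k B ib m = {(i, b). i < k \<and> b < B \<and> m i b = 1 \<and> i \<noteq> ib b}"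

definition Aset :: "nat \<Rightarrow> nat \<Rightarrow> (nat \<Rightarrow> real) \<Rightarrow> nat \<Rightarrow> nat \<Rightarrow> (nat \<Rightarrow> nat \<Rightarrow> real) set" where
  "Aset k B p istar j = {m \<in> Mset k B. dM B p istar j m \<le> 0}"

definition LDR :: "nat \<Rightarrow> nat \<Rightarrow> (nat \<Rightarrow> real) \<Rightarrow> (nat \<Rightarrow> nat \<Rightarrow> real) \<Rightarrow> (nat \<Rightarrow> nat \<Rightarrow> real)
    \<Rightarrow> (nat \<Rightarrow> nat \<Rightarrow> real) \<Rightarrow> (nat \<Rightarrow> nat) \<Rightarrow> nat \<Rightarrow> nat \<Rightarrow> real" where
  "LDR k B p y lam2 alpha ib istar j =
     Min ((\<lambda>m. \<Sum>(i, b)\<in>IM k B ib m. Gfun y lam2 alpha ib i b) ` Aset k B p istar j)"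

definition dtrue :: "nat \<Rightarrow> (nat \<Rightarrow> real) \<Rightarrow> (nat \<Rightarrow> nat) \<Rightarrow> nat \<Rightarrow> nat \<Rightarrow> real" where
  "dtrue B p ib istar j =
     (\<Sum>b<B. p b * (if istar = ib b then 1 else 0)) - (\<Sum>b<B. p b * (if j = ib b then 1 else 0))"

definition Xi :: "nat \<Rightarrow> nat \<Rightarrow> (nat \<Rightarrow> nat) \<Rightarrow> nat \<Rightarrow> (nat \<times> nat) set" where
  "Xi k B ib istar = {(i, b). i < k \<and> b < B \<and> i \<noteq> istar \<and> i \<noteq> ib b}"

definition Wt :: "nat \<Rightarrow> nat \<Rightarrow> (nat \<Rightarrow> real) \<Rightarrow> (nat \<Rightarrow> nat) \<Rightarrow> nat \<Rightarrow> nat \<Rightarrow> nat \<Rightarrow> ereal" where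
  "Wt k B p ib istar i b =
     (if (i, b) \<notin> Xi k B ib istar then \<infinity>
      else if ib b = istar then
        ereal (max (min (Min {dtrue B p ib istar j | j. j < k \<and> j \<noteq> istar})
                        (dtrue B p ib istar i / 2) / p b) 1)
      else ereal (max (dtrue B p ib istar i / p b) 1))"

definition LDRlow :: "nat \<Rightarrow> nat \<Rightarrow> (nat \<Rightarrow> real) \<Rightarrow> (nat \<Rightarrow> nat \<Rightarrow> real) \<Rightarrow> (nat \<Rightarrow> nat \<Rightarrow> real)
    \<Rightarrow> (nat \<Rightarrow> nat \<Rightarrow> real) \<Rightarrow> (nat \<Rightarrow> nat) \<Rightarrow> nat \<Rightarrow> ereal" where
  "LDRlow k B p y lam2 alpha ib istar =
     Min ((\<lambda>(i, b). Wt k B p ib istar i b * ereal (Gfun y lam2 alpha ib i b)) ` Xi k B ib istar)"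

end

theory Submission
  imports Defs
begin

lemma col_unique:
  assumes "m \<in> Mset k B" "b < B"
  shows "\<exists>a<k. m a b = 1 \<and> (\<forall>i<k. i \<noteq> a \<longrightarrow> m i b = 0)"
proof -
  have ent: "\<forall>i<k. m i b \<in> {0,1}" and s: "(\<Sum>i<k. m i b) = 1"
    using assms unfolding Mset_def by auto
  have "\<exists>a<k. m a b = 1"
  proof (rule ccontr)
    assume "\<not> ?thesis"
    then have "\<forall>i<k. m i b = 0" using ent by auto
    then have "(\<Sum>i<k. m i b) = 0" by simp
    with s show False by simp
  qed
  then obtain a where a: "a < k" "m a b = 1" by blast
  have "\<forall>i<k. i \<noteq> a \<longrightarrow> m i b = 0"
  proof (intro allI impI, rule ccontr)
    fix i assume i: "i < k" "i \<noteq> a" "m i b \<noteq> 0"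
    then have mi: "m i b = 1" using ent by auto
    have "(\<Sum>x\<in>{a,i}. m x b) \<le> (\<Sum>x<k. m x b)"
      by (rule sum_mono2) (use a i ent in auto)
    moreover have "(\<Sum>x\<in>{a,i}. m x b) = 2" using a mi i by simp
    ultimately show False using s by simp
  qed
  with a show ?thesis by blast
qed

lemma core:
  fixes G :: "nat \<Rightarrow> nat \<Rightarrow> real" and c :: "nat \<Rightarrow> nat \<Rightarrow> real"
  assumes mM: "m \<in> Mset k B" and dM: "dM B p istar j m \<le> 0"
    and j: "j < k" "j \<noteq> istar" and ist: "istar < k"
    and p_pos: "\<forall>b<B. p b > 0"
    and ibk: "\<forall>b<B. ib b < k"
    and dpos: "\<forall>i<k. i \<noteq> istar \<longrightarrow> dtrue B p ib istar i > 0"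
    and dm_pos: "dm > 0" and dm_le: "\<forall>i<k. i \<noteq> istar \<longrightarrow> dm \<le> dtrue B p ib istar i"
    and c_def: "\<forall>i b. c i b = (if ib b = istar then min dm (dtrue B p ib istar i / 2) else dtrue B p ib istar i)"
    and Gnn: "\<forall>i<k. \<forall>b<B. G i b \<ge> 0"
    and mm_le: "\<forall>(i,b)\<in>Xi k B ib istar. mm \<le> max (c i b / p b) 1 * G i b"
    and mm_nn: "mm \<ge> 0"
  shows "mm \<le> (\<Sum>(i,b)\<in>IM k B ib m. G i b)"
proof -
  let ?P = "{..<k} \<times> {..<B}"
  have fin: "finite ?P" by simp
  have IMsub: "IM k B ib m \<subseteq> ?P" unfolding IM_def by auto
  define S where "S = IM k B ib m \<inter> Xi k B ib istar"
  have SP: "S \<subseteq> ?P" using IMsub S_def by auto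
  have finS: "finite S" using SP fin finite_subset by blast
  have cpos: "c i b > 0" if "i < k" "i \<noteq> istar" for i b
    using c_def dpos dm_pos that by auto
  have SXi: "x \<in> Xi k B ib istar" if "x \<in> S" for x using that S_def by auto
  have Sdesc: "(i,b) \<in> S \<longleftrightarrow> i < k \<and> b < B \<and> m i b = 1 \<and> i \<noteq> istar \<and> i \<noteq> ib b" for i b
    unfolding S_def IM_def Xi_def by auto
  have sumS: "(\<Sum>(i,b)\<in>S. G i b) \<le> (\<Sum>(i,b)\<in>IM k B ib m. G i b)"
    apply (rule sum_mono2)
    using IMsub fin finite_subset apply blast
    using S_def apply blast
    using IMsub Gnn by auto
  show ?thesis
  proof (cases "\<exists>(i,b)\<in>S. max (c i b / p b) 1 = 1")
    case True
    then obtain i b where ib: "(i,b) \<in> S" "max (c i b / p b) 1 = 1" by blast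
    have "mm \<le> max (c i b / p b) 1 * G i b" using mm_le SXi[OF ib(1)] by blast
    then have "mm \<le> G i b" using ib(2) by simp
    also have "G i b \<le> (\<Sum>(i,b)\<in>S. G i b)"
      using member_le_sum[of "(i,b)" S "\<lambda>(i,b). G i b"] ib(1) finS Gnn SP by (auto simp: subset_iff)
    finally show ?thesis using sumS by linarith
  next
    case False
    have lowG: "mm * (p b / c i b) \<le> G i b" if "(i,b) \<in> S" for i b
    proof -
      have w: "max (c i b / p b) 1 = c i b / p b" using False that
        using that by (auto simp: max_def)
      have cp: "c i b > 0" "p b > 0" using that Sdesc cpos p_pos by auto
      have "mm \<le> max (c i b / p b) 1 * G i b" using mm_le SXi[OF that] by blast
      then have "mm \<le> c i b / p b * G i b" using w by simp
      then show ?thesis using cp by (simp add: field_simps)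
    qed
    define f where "f = (\<lambda>(i,b). p b / c i b)"
    have key: "(\<Sum>x\<in>S. f x) \<ge> 1"
    proof -
      define r where "r b = m j b - m istar b + (if istar = ib b then 1 else 0) - (if j = ib b then 1 else 0)" for b
      define dj where "dj = dtrue B p ib istar j"
      have djpos: "dj > 0" using dpos j dj_def by auto
      have "(\<Sum>x\<in>S. f x) = (\<Sum>x\<in>?P \<inter> S. f x)" using SP by (simp add: Int_absorb1)
      also have "\<dots> = (\<Sum>x\<in>?P. if x \<in> S then f x else 0)" by (rule sum.inter_restrict[OF fin])
      also have "\<dots> = (\<Sum>i<k. \<Sum>b<B. if (i,b) \<in> S then f (i,b) else 0)"
        by (simp add: sum.cartesian_product)
      also have "\<dots> = (\<Sum>b<B. \<Sum>i<k. if (i,b) \<in> S then f (i,b) else 0)"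
        by (rule sum.swap)
      finally have e1: "(\<Sum>x\<in>S. f x) = (\<Sum>b<B. \<Sum>i<k. if (i,b) \<in> S then f (i,b) else 0)" .
      have perb: "p b * r b / dj \<le> (\<Sum>i<k. if (i,b) \<in> S then f (i,b) else 0)" if b: "b < B" for b
      proof -
        obtain a where a: "a < k" "m a b = 1" "\<forall>i<k. i \<noteq> a \<longrightarrow> m i b = 0"
          using col_unique[OF mM b] by blast
        have "(\<Sum>i<k. if (i,b) \<in> S then f (i,b) else 0) = (\<Sum>i<k. if i = a then (if (a,b) \<in> S then f (a,b) else 0) else 0)"
          by (rule sum.cong) (use a Sdesc in auto)
        also have "\<dots> = (if (a,b) \<in> S then f (a,b) else 0)" using a by simp
        finally have e: "(\<Sum>i<k. if (i,b) \<in> S then f (i,b) else 0) = (if (a,b) \<in> S then f (a,b) else 0)" .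
        have mj: "m j b = (if j = a then 1 else 0)" using a j by auto
        have mi: "m istar b = (if istar = a then 1 else 0)" using a ist by auto
        have pb: "p b > 0" using p_pos b by auto
        have ibb: "ib b < k" using ibk b by auto
        have "r b * c a b \<le> dj" if aS: "a \<noteq> istar" "a \<noteq> ib b"
        proof -
          have ca: "c a b > 0" using cpos a aS by auto
          show ?thesis
          proof (cases "ib b = istar")
            case True
            then have cab: "c a b = min dm (dj' / 2)" if "dj' = dtrue B p ib istar a" for dj'
              using c_def that by auto
            show ?thesis
            proof (cases "a = j")
              case True
              then show ?thesis using cab[OF refl] \<open>ib b = istar\<close> r_def mj mi aS dj_def by auto
            next
              case False
              have "dm \<le> dj" using dm_le j dj_def by auto
              then show ?thesis using False cab[OF refl] \<open>ib b = istar\<close> r_def mj mi aS dj_def ca by auto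
            qed
          next
            case False
            then have cab: "c a b = dtrue B p ib istar a" using c_def by auto
            show ?thesis
            proof (cases "a = j")
              case True
              then show ?thesis using cab \<open>ib b \<noteq> istar\<close> r_def mj mi aS dj_def by auto
            next
              case False
              then show ?thesis using cab \<open>ib b \<noteq> istar\<close> r_def mj mi aS dj_def ca djpos
                by (auto simp: mult_le_0_iff)
            qed
          qed
        qed
        moreover have "r b \<le> 0" if "\<not> (a \<noteq> istar \<and> a \<noteq> ib b)"
          using that r_def mj mi j by auto
        ultimately show ?thesis
        proof (cases "(a,b) \<in> S")
          case True
          then have aS: "a \<noteq> istar" "a \<noteq> ib b" using Sdesc by auto
          have ca: "c a b > 0" using cpos a aS by auto
          have "r b * c a b \<le> dj" using \<open>a \<noteq> istar \<Longrightarrow> a \<noteq> ib b \<Longrightarrow> r b * c a b \<le> dj\<close> aS by blast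
          then have "r b / dj \<le> 1 / c a b" using ca djpos by (simp add: field_simps)
          then have "p b * (r b / dj) \<le> p b * (1 / c a b)" by (rule mult_left_mono) (use pb in auto)
          then have "p b * r b / dj \<le> p b / c a b" by simp
          then show ?thesis using True e by (simp add: f_def)
        next
          case False
          then have "\<not> (a \<noteq> istar \<and> a \<noteq> ib b)" using Sdesc a b by auto
          then have "r b \<le> 0" using r_def mj mi j by auto
          then have "p b * r b / dj \<le> 0" using pb djpos by (simp add: divide_nonpos_pos mult_nonneg_nonpos)
          then show ?thesis using False e by simp
        qed
      qed
      have "(\<Sum>b<B. p b * r b) = (\<Sum>b<B. p b * m j b) - (\<Sum>b<B. p b * m istar b) + dj"
        unfolding r_def dj_def dtrue_def
        by (simp add: algebra_simps sum.distrib sum_subtractf)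
      then have "(\<Sum>b<B. p b * r b) \<ge> dj" using dM unfolding dM_def by linarith
      then have "1 \<le> (\<Sum>b<B. p b * r b) / dj" using djpos by simp
      also have "\<dots> = (\<Sum>b<B. p b * r b / dj)" by (simp add: sum_divide_distrib)
      also have "\<dots> \<le> (\<Sum>b<B. \<Sum>i<k. if (i,b) \<in> S then f (i,b) else 0)"
        by (rule sum_mono) (use perb in auto)
      finally show ?thesis using e1 by simp
    qed
    have "mm \<le> mm * (\<Sum>x\<in>S. f x)" using mult_left_mono[OF key mm_nn] by simp
    also have "\<dots> = (\<Sum>(i,b)\<in>S. mm * (p b / c i b))"
      by (simp add: sum_distrib_left f_def case_prod_beta)
    also have "\<dots> \<le> (\<Sum>(i,b)\<in>S. G i b)"
      by (rule sum_mono) (use lowG in auto)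
    finally show ?thesis using sumS by linarith
  qed
qed

theorem theorem2:
  fixes k B :: nat and p :: "nat \<Rightarrow> real"
    and y lam2 alpha :: "nat \<Rightarrow> nat \<Rightarrow> real"
    and ib :: "nat \<Rightarrow> nat" and istar :: nat
  assumes k2: "k \<ge> 2"
    and p_pos: "\<forall>b<B. p b > 0"
    and p_sum: "(\<Sum>b<B. p b) = 1"
    and lam_pos: "\<forall>i<k. \<forall>b<B. lam2 i b > 0"
    and alpha_nonneg: "\<forall>i<k. \<forall>b<B. alpha i b \<ge> 0"
    and alpha_sum: "(\<Sum>i<k. \<Sum>b<B. alpha i b) = 1"
    and ib_def: "\<forall>b<B. ib b < k \<and> (\<forall>i<k. i \<noteq> ib b \<longrightarrow> y (ib b) b < y i b)"
    and istar_def: "istar < k \<and> (\<forall>j<k. j \<noteq> istar \<longrightarrow>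
          (\<Sum>b<B. p b * (if j = ib b then 1 else 0)) < (\<Sum>b<B. p b * (if istar = ib b then 1 else 0)))"
  shows "ereal (Min {LDR k B p y lam2 alpha ib istar j | j. j < k \<and> j \<noteq> istar})
           \<ge> LDRlow k B p y lam2 alpha ib istar"
proof -
  have ist: "istar < k" using istar_def by blast
  have ibk: "\<forall>b<B. ib b < k" using ib_def by blast
  define G where "G = Gfun y lam2 alpha ib"
  have Gnn: "\<forall>i<k. \<forall>b<B. G i b \<ge> 0"
  proof (intro allI impI)
    fix i b assume i: "i < k" and b: "b < B"
    have l1: "lam2 i b > 0" "lam2 (ib b) b > 0" using lam_pos i b ibk by auto
    have a1: "alpha i b \<ge> 0" "alpha (ib b) b \<ge> 0" using alpha_nonneg i b ibk by auto
    show "G i b \<ge> 0"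
    proof (cases "alpha i b = 0 \<or> alpha (ib b) b = 0")
      case True then show ?thesis by (simp add: G_def Gfun_def)
    next
      case False
      then have "alpha i b > 0" "alpha (ib b) b > 0" using a1 by auto
      then have "lam2 i b / alpha i b + lam2 (ib b) b / alpha (ib b) b > 0" using l1 by (simp add: add_pos_pos divide_pos_pos)
      then show ?thesis using False by (simp add: G_def Gfun_def)
    qed
  qed
  have dpos: "\<forall>i<k. i \<noteq> istar \<longrightarrow> dtrue B p ib istar i > 0"
    using istar_def unfolding dtrue_def by auto
  obtain j0 where j0: "j0 < k" "j0 \<noteq> istar"
  proof (cases "istar = 0")
    case True then show ?thesis using that[of 1] k2 by auto
  next
    case False then show ?thesis using that[of 0] k2 by auto
  qed
  define Dset where "Dset = {dtrue B p ib istar j | j. j < k \<and> j \<noteq> istar}"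
  define dm where "dm = Min Dset"
  have Dfin: "finite Dset" unfolding Dset_def by simp
  have Dne: "Dset \<noteq> {}" unfolding Dset_def using j0 by auto
  have dm_pos: "dm > 0" unfolding dm_def using Dfin Dne dpos by (auto simp: Min_gr_iff Dset_def)
  have dm_le: "\<forall>i<k. i \<noteq> istar \<longrightarrow> dm \<le> dtrue B p ib istar i"
    unfolding dm_def using Dfin by (auto intro!: Min_le simp: Dset_def)
  define c where "c i b = (if ib b = istar then min dm (dtrue B p ib istar i / 2) else dtrue B p ib istar i)" for i b
  have c_def': "\<forall>i b. c i b = (if ib b = istar then min dm (dtrue B p ib istar i / 2) else dtrue B p ib istar i)"
    using c_def by simp
  have Wt_eq: "Wt k B p ib istar i b = ereal (max (c i b / p b) 1)" if "(i,b) \<in> Xi k B ib istar" for i b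
    using that unfolding Wt_def c_def dm_def Dset_def by auto
  have "(\<Sum>b<B. p b * (if j0 = ib b then 1 else 0)) \<ge> 0"
    using p_pos by (intro sum_nonneg) auto
  then have "(\<Sum>b<B. p b * (if istar = ib b then 1 else (0::real))) > 0" using istar_def j0 by force
  then obtain b0 where b0: "b0 < B" "istar = ib b0"
  proof -
    assume pos: "(\<Sum>b<B. p b * (if istar = ib b then 1 else (0::real))) > 0"
      and th: "\<And>b0. b0 < B \<Longrightarrow> istar = ib b0 \<Longrightarrow> thesis"
    show thesis
    proof (rule ccontr)
      assume "\<not> thesis"
      then have "\<forall>b<B. istar \<noteq> ib b" using th by blast
      then have "(\<Sum>b<B. p b * (if istar = ib b then 1 else (0::real))) = 0" by simp
      then show False using pos by simp
    qed
  qed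
  have j0Xi: "(j0, b0) \<in> Xi k B ib istar" using j0 b0 unfolding Xi_def by auto
  have Xfin: "finite (Xi k B ib istar)"
    by (rule finite_subset[of _ "{..<k} \<times> {..<B}"]) (auto simp: Xi_def)
  let ?img = "(\<lambda>(i, b). Wt k B p ib istar i b * ereal (Gfun y lam2 alpha ib i b)) ` Xi k B ib istar"
  have "LDRlow k B p y lam2 alpha ib istar \<in> ?img"
    unfolding LDRlow_def by (rule Min_in) (use Xfin j0Xi in auto)
  then obtain i0 b0' where ib0: "(i0, b0') \<in> Xi k B ib istar"
    and low_eq: "LDRlow k B p y lam2 alpha ib istar = Wt k B p ib istar i0 b0' * ereal (G i0 b0')"
    unfolding G_def by auto
  define mm where "mm = max (c i0 b0' / p b0') 1 * G i0 b0'"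
  have low_mm: "LDRlow k B p y lam2 alpha ib istar = ereal mm"
    by (simp only: low_eq Wt_eq[OF ib0] mm_def times_ereal.simps(1))
  have mm_le: "\<forall>(i,b)\<in>Xi k B ib istar. mm \<le> max (c i b / p b) 1 * G i b"
  proof (intro ballI, clarify)
    fix i b assume ibX: "(i, b) \<in> Xi k B ib istar"
    have "LDRlow k B p y lam2 alpha ib istar \<le> Wt k B p ib istar i b * ereal (G i b)"
      unfolding LDRlow_def G_def by (rule Min_le) (use Xfin ibX in auto)
    then have "ereal mm \<le> ereal (max (c i b / p b) 1 * G i b)"
      by (simp only: low_mm Wt_eq[OF ibX] times_ereal.simps(1))
    then show "mm \<le> max (c i b / p b) 1 * G i b" by simp
  qed
  have mm_nn: "mm \<ge> 0"
  proof -
    have "i0 < k" "b0' < B" using ib0 unfolding Xi_def by auto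
    then have "G i0 b0' \<ge> 0" using Gnn by auto
    then show ?thesis unfolding mm_def by simp
  qed
  define LS where "LS = {LDR k B p y lam2 alpha ib istar j | j. j < k \<and> j \<noteq> istar}"
  have LSfin: "finite LS" unfolding LS_def by simp
  have LSne: "LS \<noteq> {}" unfolding LS_def using j0 by auto
  have "Min LS \<in> LS" using LSfin LSne by (rule Min_in)
  then obtain j where j: "j < k" "j \<noteq> istar" and LSj: "Min LS = LDR k B p y lam2 alpha ib istar j"
    unfolding LS_def by auto
  let ?f = "\<lambda>m. \<Sum>(i, b)\<in>IM k B ib m. Gfun y lam2 alpha ib i b"
  have imfin: "finite (?f ` Aset k B p istar j)"
  proof (rule finite_subset)
    show "?f ` Aset k B p istar j \<subseteq> (\<lambda>T. \<Sum>(i, b)\<in>T. Gfun y lam2 alpha ib i b) ` Pow ({..<k} \<times> {..<B})"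
      by (auto simp: IM_def)
  qed simp
  define m0 where "m0 = (\<lambda>i (b::nat). if i = j then (1::real) else 0)"
  have m0A: "m0 \<in> Aset k B p istar j"
  proof -
    have "m0 \<in> Mset k B" unfolding Mset_def m0_def using j by auto
    moreover have "dM B p istar j m0 \<le> 0" unfolding dM_def m0_def using j p_sum by simp
    ultimately show ?thesis unfolding Aset_def by simp
  qed
  have "LDR k B p y lam2 alpha ib istar j \<in> ?f ` Aset k B p istar j"
    unfolding LDR_def by (rule Min_in) (use imfin m0A in auto)
  then obtain m where mA: "m \<in> Aset k B p istar j"
    and Leq: "LDR k B p y lam2 alpha ib istar j = (\<Sum>(i, b)\<in>IM k B ib m. G i b)"
    unfolding G_def by auto
  have "mm \<le> (\<Sum>(i, b)\<in>IM k B ib m. G i b)"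
    using mA unfolding Aset_def
    by (intro core[where c=c and dm=dm]) (use j ist p_pos ibk dpos dm_pos dm_le c_def' Gnn mm_le mm_nn in auto)
  then show ?thesis using low_mm LSj Leq unfolding LS_def by simp
qed

end
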